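(* Consider the ReLU network with skipped connections, training data $(x^{(i)},y^{(i)})_{i=1}^T\subset\mathbb R^{d_0}\times\mathbb R^{d_0}$ and cost $C=\frac12\sum_{i=1}^T\|F(x^{(i)})-y^{(i)}\|^2$. Fix $l\in[\kappa]$ and define the gradient of $C$ with respect to $\tilde S^l$ (treated as a free matrix) by the chain-rule expression $$\nabla_{\tilde S^l}C:=\sum_{i=1}^T\big(\chi^l(x^{(i)})\otimes I_{d_{l-1}}\big)\,\tilde\Lambda^l(x^{(i)})\,\tilde\Upsilon^{l-1}(x^{(i)})^\top\big(F(x^{(i)})-y^{(i)}\big)\in\mathbb R^{s_ld_{l-1}}$$ (this is the true gradient with respect to $\mathrm{vec}(\tilde S^l)$ whenever no decoder pre-activation at layers $1,\dots,l$ vanishes at any training input). Let $\Gamma^l=[\chi^l(x^{(1)})\cdots\chi^l(x^{(T)})]\in\mathbb R^{s_l\times T}$ and assume $s_l\ge T$ and $d_{l-1}\ge d_0$. Then $$\|\nabla_{\tilde S^l}C\|_F\ge\sigma_{\min}(\Gamma^l)\,\min_{i\in[T]}\sigma_{\min}\big(\tilde\Lambda^l(x^{(i)})\tilde\Upsilon^{l-1}(x^{(i)})^\top\big)\sqrt{2C}$$ and $$\|\nabla_{\tilde S^l}C\|_F\le\sigma_{\max}(\Gamma^l)\,\max_{i\in[T]}\sigma_{\max}\big(\tilde\Lambda^l(x^{(i)})\tilde\Upsilon^{l-1}(x^{(i)})^\top\big)\sqrt{2C}.$$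
   Context: For $A\in\mathbb R^{n\times m}$ with $n\ge m$, $\sigma_{\min}(A)$ and $\sigma_{\max}(A)$ denote the smallest and largest of its $m$ singular values. $\otimes$ is the Kronecker product, $\|\cdot\|_F$ the Frobenius (Euclidean) norm, $\sigma(t)=\max(t,0)$ entrywise, $[n]=\{1,\dots,n\}$. Network with skipped connections on inputs $x\in\mathbb R^{d_0}$, with layer dimensions $d_0,\dots,d_\kappa$ and skip dimensions $s_1,\dots,s_\kappa$: given matrices $E^l\in\mathbb R^{d_{l-1}\times d_l}$, $D^l\in\mathbb R^{d_{l-1}\times d_l}$, $S^l\in\mathbb R^{d_{l-1}\times s_l}$, $\tilde S^l\in\mathbb R^{d_{l-1}\times s_l}$ ($l\in[\kappa]$), define $\xi^0=x$, $\xi^l=\sigma(E^{l\top}\xi^{l-1})$, $\chi^l=\sigma(S^{l\top}\xi^{l-1})$, $\tilde\xi^\kappa=\xi^\kappa$, $\tilde\xi^{l-1}=\sigma(D^l\tilde\xi^l+\tilde S^l\chi^l)$ (decoder pre-activation at layer $l$: $D^l\tilde\xi^l+\tilde S^l\chi^l$), $F(x)=\tilde\xi^0$. $\tilde\Lambda^l(x)\in\mathbb R^{d_{l-1}\times d_{l-1}}$ is diagonal with $i$-th entry $1$ if the $i$-th decoder pre-activation at layer $l$ is $>0$ and $0$ otherwise; $\tilde\Upsilon^0=I_{d_0}$, $\tilde\Upsilon^l(x)=\tilde\Upsilon^{l-1}(x)\tilde\Lambda^l(x)D^l\in\mathbb R^{d_0\times d_l}$. *)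

theory Defs
  imports Complex_Main "Jordan_Normal_Form.Char_Poly"
begin

text \<open>Matrices/vectors are Jordan_Normal_Form matrices/vectors (dimensions carried in the
value).  Layer parameters are families indexed by the layer number l (used for l = 1..kappa).\<close>

definition relu :: "real vec \<Rightarrow> real vec" where
  "relu v = map_vec (\<lambda>t. max t 0) v"

definition vnorm :: "real vec \<Rightarrow> real" where
  "vnorm v = sqrt (\<Sum>i<dim_vec v. (v $ i)^2)"

definition kron :: "real mat \<Rightarrow> real mat \<Rightarrow> real mat" where
  "kron A B = mat (dim_row A * dim_row B) (dim_col A * dim_col B)
      (\<lambda>(i,j). A $$ (i div dim_row B, j div dim_col B) * B $$ (i mod dim_row B, j mod dim_col B))"

definition col_mat :: "real vec \<Rightarrow> real mat" where
  "col_mat v = mat (dim_vec v) 1 (\<lambda>(i,j). v $ i)"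

primrec enc :: "(nat \<Rightarrow> real mat) \<Rightarrow> real vec \<Rightarrow> nat \<Rightarrow> real vec" where
  "enc E x 0 = x"
| "enc E x (Suc l) = relu (transpose_mat (E (Suc l)) *\<^sub>v enc E x l)"

definition skip :: "(nat \<Rightarrow> real mat) \<Rightarrow> (nat \<Rightarrow> real mat) \<Rightarrow> real vec \<Rightarrow> nat \<Rightarrow> real vec" where
  "skip E S x l = relu (transpose_mat (S l) *\<^sub>v enc E x (l - 1))"

text \<open>Decoder, counted by steps: dec_aux j = tilde xi^(kappa - j).\<close>
primrec dec_aux :: "nat \<Rightarrow> (nat \<Rightarrow> real mat) \<Rightarrow> (nat \<Rightarrow> real mat) \<Rightarrow> (nat \<Rightarrow> real mat)
    \<Rightarrow> (nat \<Rightarrow> real mat) \<Rightarrow> real vec \<Rightarrow> nat \<Rightarrow> real vec" where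
  "dec_aux \<kappa> E D S St x 0 = enc E x \<kappa>"
| "dec_aux \<kappa> E D S St x (Suc j) =
     relu (D (\<kappa> - j) *\<^sub>v dec_aux \<kappa> E D S St x j + St (\<kappa> - j) *\<^sub>v skip E S x (\<kappa> - j))"

definition dec where
  "dec \<kappa> E D S St x l = dec_aux \<kappa> E D S St x (\<kappa> - l)"

definition net where
  "net \<kappa> E D S St x = dec \<kappa> E D S St x 0"

definition preact where
  "preact \<kappa> E D S St x l = D l *\<^sub>v dec \<kappa> E D S St x l + St l *\<^sub>v skip E S x l"

definition Lam where
  "Lam \<kappa> E D S St x l =
     (let p = preact \<kappa> E D S St x l in
      mat (dim_vec p) (dim_vec p) (\<lambda>(i,j). if i = j \<and> p $ i > 0 then 1 else 0))"

primrec Ups where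
  "Ups \<kappa> E D S St x d0 0 = 1\<^sub>m d0"
| "Ups \<kappa> E D S St x d0 (Suc l) = Ups \<kappa> E D S St x d0 l * Lam \<kappa> E D S St x (Suc l) * D (Suc l)"

definition sing_vals :: "real mat \<Rightarrow> real set" where
  "sing_vals A = sqrt ` {\<mu>. eigenvalue (transpose_mat A * A) \<mu>}"

definition sigma_min :: "real mat \<Rightarrow> real" where
  "sigma_min A = Min (sing_vals A)"

definition sigma_max :: "real mat \<Rightarrow> real" where
  "sigma_max A = Max (sing_vals A)"

end

theory Submission
  imports Defs "HOL-Analysis.Function_Topology"
begin

lemma qf_expand:
  fixes B :: "real mat"
  assumes B: "B \<in> carrier_mat m m" and v: "v \<in> carrier_vec m"
  shows "v \<bullet> (B *\<^sub>v v) = (\<Sum>i<m. \<Sum>j<m. B$$(i,j) * v$i * v$j)"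
  using B v by (simp add: scalar_prod_def mult_mat_vec_def row_def atLeast0LessThan
        sum_distrib_left mult.assoc mult.left_commute)

lemma nf_expand:
  fixes v :: "real vec"
  assumes v: "v \<in> carrier_vec m"
  shows "v \<bullet> v = (\<Sum>i<m. (v$i)^2)"
  using v by (simp add: scalar_prod_def atLeast0LessThan power2_eq_square)

lemma rayleigh_fun:
  fixes B :: "real mat"
  assumes m: "m > 0"
  defines "nf \<equiv> \<lambda>f::nat\<Rightarrow>real. (\<Sum>i<m. (f i)^2)"
    and "qf \<equiv> \<lambda>f::nat\<Rightarrow>real. (\<Sum>i<m. \<Sum>j<m. B$$(i,j) * f i * f j)"
  shows "\<exists>f0. nf f0 = 1 \<and> (\<forall>g. qf f0 * nf g \<le> qf g)"
proof -
  define X where "X = (\<lambda>i::nat. if i < m then {-1..1::real} else {0})"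
  have cPi: "compact (PiE UNIV X)"
  proof -
    have "compactin (product_topology (\<lambda>i. euclidean) UNIV) (PiE UNIV X)"
      unfolding compactin_PiE by (auto simp: X_def)
    thus ?thesis by (simp add: euclidean_product_topology compactin_euclidean_iff)
  qed
  have cnf: "continuous_on UNIV nf" unfolding nf_def
    by (intro continuous_intros continuous_on_product_then_coordinatewise continuous_on_id)
  have cqf: "continuous_on UNIV qf" unfolding qf_def
    by (intro continuous_intros continuous_on_product_then_coordinatewise continuous_on_id)
  define K where "K = PiE UNIV X \<inter> {f. nf f = 1}"
  have "closed {f. nf f = 1}"
    using cnf by (intro closed_Collect_eq continuous_on_const) auto
  hence cK: "compact K" unfolding K_def using cPi by (simp add: compact_Int_closed)
  define e0 where "e0 = (\<lambda>i::nat. if i = 0 then 1 else (0::real))"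
  have "e0 \<in> K"
  proof -
    have "(\<Sum>i<m. (e0 i)^2) = (\<Sum>i<m. if i = 0 then 1 else 0)"
      unfolding e0_def by (rule sum.cong) auto
    also have "\<dots> = 1" using m by (simp add: sum.delta)
    finally show ?thesis using m unfolding K_def X_def nf_def by (auto simp: e0_def)
  qed
  hence "K \<noteq> {}" by auto
  from continuous_attains_inf[OF cK this continuous_on_subset[OF cqf]]
  obtain f0 where f0K: "f0 \<in> K" and f0min: "\<And>y. y \<in> K \<Longrightarrow> qf f0 \<le> qf y" by auto
  have nf0: "nf f0 = 1" using f0K unfolding K_def by auto
  have "qf f0 * nf g \<le> qf g" for g
  proof (cases "nf g = 0")
    case True
    hence "\<forall>i\<in>{..<m}. (g i)^2 = 0" unfolding nf_def
      by (subst sum_nonneg_eq_0_iff[symmetric]) auto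
    hence "qf g = 0" unfolding qf_def by auto
    thus ?thesis using True by simp
  next
    case False
    have nfpos: "nf g > 0" using False unfolding nf_def
      by (metis (no_types, lifting) less_eq_real_def sum_nonneg zero_le_power2)
    define c where "c = sqrt (nf g)"
    have c: "c > 0" "c^2 = nf g" using nfpos unfolding c_def by auto
    define h where "h = (\<lambda>i. if i < m then g i / c else 0)"
    have nfh: "nf h = nf g / c^2" unfolding nf_def h_def
      by (simp add: sum_divide_distrib power_divide)
    hence nfh1: "nf h = 1" using c False by simp
    have qfh: "qf h = qf g / c^2" unfolding qf_def h_def
      by (simp add: sum_divide_distrib power2_eq_square)
    have "h \<in> K"
    proof -
      have "h i \<in> X i" for i
      proof (cases "i < m")
        case True
        have "(h i)^2 \<le> nf h" unfolding nf_def
          by (rule member_le_sum[of i "{..<m}" "\<lambda>i. (h i)^2"]) (use True in auto)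
        hence "\<bar>h i\<bar> \<le> 1" using nfh1 by (simp add: abs_square_le_1)
        thus ?thesis using True unfolding X_def by auto
      qed (auto simp: X_def h_def)
      thus ?thesis using nfh1 unfolding K_def by auto
    qed
    hence "qf f0 \<le> qf g / c^2" using f0min qfh by metis
    thus ?thesis using c nfpos by (simp add: field_simps)
  qed
  thus ?thesis using nf0 by blast
qed

lemma quad_zero:
  fixes a b :: real
  assumes b: "b \<ge> 0" and H: "\<And>t. 0 \<le> 2*t*a + t^2*b"
  shows "a = 0"
proof -
  define t where "t = -a/(b+1)"
  have "0 \<le> 2*t*a + t^2*b" by (rule H)
  hence "0 \<le> (2*t*a + t^2*b) * (b+1)^2" using b by simp
  also have "(2*t*a + t^2*b) * (b+1)^2 = 2*a*(t*(b+1))*(b+1) + (t*(b+1))^2*b"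
    by (simp add: algebra_simps power2_eq_square)
  also have "t*(b+1) = -a" using b unfolding t_def by simp
  also have "2*a*(-a)*(b+1) + (-a)^2*b = -(a^2) * (b+2)"
    by (simp add: algebra_simps power2_eq_square)
  finally have "a^2 * (b+2) \<le> 0" by simp
  hence "a^2 \<le> 0" using b by (simp add: mult_le_0_iff)
  thus ?thesis by simp
qed

lemma qf_bilin:
  fixes B :: "real mat"
  shows "(\<Sum>i<m. \<Sum>j<m. B$$(i,j) * (x i + t * y i) * (x j + t * y j)) =
    (\<Sum>i<m. \<Sum>j<m. B$$(i,j) * x i * x j)
    + t * ((\<Sum>i<m. \<Sum>j<m. B$$(i,j) * x i * y j) + (\<Sum>i<m. \<Sum>j<m. B$$(i,j) * y i * x j))
    + t^2 * (\<Sum>i<m. \<Sum>j<m. B$$(i,j) * y i * y j)"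
  by (simp add: sum.distrib sum_distrib_left algebra_simps power2_eq_square)

lemma nf_bilin:
  fixes x y :: "nat \<Rightarrow> real"
  shows "(\<Sum>i<m. (x i + t * y i)^2) = (\<Sum>i<m. (x i)^2) + 2 * t * (\<Sum>i<m. x i * y i) + t^2 * (\<Sum>i<m. (y i)^2)"
  by (simp add: sum.distrib sum_distrib_left algebra_simps power2_eq_square)

lemma rayleigh_min:
  fixes B :: "real mat"
  assumes B: "B \<in> carrier_mat m m" and sym: "transpose_mat B = B" and m: "m > 0"
  shows "\<exists>lam u. eigenvector B u lam \<and> (\<forall>v\<in>carrier_vec m. lam * (v \<bullet> v) \<le> v \<bullet> (B *\<^sub>v v))"
proof -
  define nf where "nf = (\<lambda>f::nat\<Rightarrow>real. (\<Sum>i<m. (f i)^2))"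
  define qf where "qf = (\<lambda>f::nat\<Rightarrow>real. (\<Sum>i<m. \<Sum>j<m. B$$(i,j) * f i * f j))"
  obtain f0 where nf0: "nf f0 = 1" and R: "\<And>g. qf f0 * nf g \<le> qf g"
    using rayleigh_fun[OF m, of B] unfolding nf_def qf_def by blast
  define lam where "lam = qf f0"
  define u where "u = vec m f0"
  have u: "u \<in> carrier_vec m" unfolding u_def by simp
  have symm: "B$$(i,j) = B$$(j,i)" if "i < m" "j < m" for i j
    using sym B that by (metis carrier_matD index_transpose_mat(1))
  have Ray: "lam * (v \<bullet> v) \<le> v \<bullet> (B *\<^sub>v v)" if v: "v \<in> carrier_vec m" for v
    using R[of "\<lambda>i. v$i"] unfolding lam_def qf_expand[OF B v] nf_expand[OF v] nf_def qf_def .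
  have "u \<noteq> 0\<^sub>v m"
  proof
    assume "u = 0\<^sub>v m"
    hence "\<forall>i<m. f0 i = 0" unfolding u_def by (metis index_vec index_zero_vec(1))
    hence "nf f0 = 0" unfolding nf_def by simp
    thus False using nf0 by simp
  qed
  moreover have "B *\<^sub>v u = lam \<cdot>\<^sub>v u"
  proof (rule eq_vecI)
    show "dim_vec (B *\<^sub>v u) = dim_vec (lam \<cdot>\<^sub>v u)" using B u by simp
    fix k assume "k < dim_vec (lam \<cdot>\<^sub>v u)"
    hence k: "k < m" using u by simp
    define e where "e = (\<lambda>i::nat. if i = k then 1 else (0::real))"
    define a0 where "a0 = (\<Sum>j<m. B$$(k,j) * f0 j)"
    have lhs: "(B *\<^sub>v u) $ k = a0"
      using B k unfolding a0_def u_def by (simp add: mult_mat_vec_def scalar_prod_def row_def atLeast0LessThan)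
    have s1: "(\<Sum>i<m. \<Sum>j<m. B$$(i,j) * f0 i * e j) = a0"
    proof -
      have "(\<Sum>i<m. \<Sum>j<m. B$$(i,j) * f0 i * e j) = (\<Sum>i<m. B$$(i,k) * f0 i)"
        unfolding e_def using k by (simp add: if_distrib sum.delta cong: if_cong)
      also have "\<dots> = a0" unfolding a0_def using k symm by (intro sum.cong) auto
      finally show ?thesis .
    qed
    have s2: "(\<Sum>i<m. \<Sum>j<m. B$$(i,j) * e i * f0 j) = a0"
    proof -
      have "(\<Sum>i<m. \<Sum>j<m. B$$(i,j) * e i * f0 j) = (\<Sum>i<m. if i = k then a0 else 0)"
        unfolding e_def a0_def by (rule sum.cong) auto
      thus ?thesis using k by simp
    qed
    have s3: "(\<Sum>i<m. \<Sum>j<m. B$$(i,j) * e i * e j) = B$$(k,k)"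
    proof -
      have "(\<Sum>i<m. \<Sum>j<m. B$$(i,j) * e i * e j) = (\<Sum>i<m. if i = k then B$$(k,k) else 0)"
        unfolding e_def using k by (intro sum.cong) (auto simp: sum.delta mult.commute[of _ "if _ then _ else _"] if_distrib cong: if_cong)
      thus ?thesis using k by simp
    qed
    have n2: "(\<Sum>i<m. f0 i * e i) = f0 k" unfolding e_def using k
      by (simp add: if_distrib sum.delta cong: if_cong)
    have n3: "(\<Sum>i<m. (e i)^2) = 1"
    proof -
      have "(\<Sum>i<m. (e i)^2) = (\<Sum>i<m. if i = k then 1 else 0)"
        unfolding e_def by (rule sum.cong) auto
      thus ?thesis using k by simp
    qed
    have bk: "lam \<le> B$$(k,k)" using R[of e] unfolding qf_def nf_def lam_def s3 n3 by simp
    have "a0 - lam * f0 k = 0"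
    proof (rule quad_zero[of "B$$(k,k) - lam"])
      show "0 \<le> B$$(k,k) - lam" using bk by simp
      fix t
      have "qf f0 * nf (\<lambda>i. f0 i + t * e i) \<le> qf (\<lambda>i. f0 i + t * e i)" by (rule R)
      hence "lam * (1 + 2 * t * f0 k + t^2) \<le> lam + t * (a0 + a0) + t^2 * B$$(k,k)"
        unfolding qf_def nf_def qf_bilin nf_bilin s1 s2 s3 n2 n3
        using nf0 unfolding nf_def lam_def qf_def by simp
      thus "0 \<le> 2 * t * (a0 - lam * f0 k) + t^2 * (B$$(k,k) - lam)"
        by (simp add: algebra_simps)
    qed
    thus "(B *\<^sub>v u) $ k = (lam \<cdot>\<^sub>v u) $ k" using lhs k unfolding u_def by simp
  qed
  ultimately have "eigenvector B u lam" unfolding eigenvector_def using u B by auto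
  thus ?thesis using Ray by blast
qed

lemma rayleigh_max:
  fixes B :: "real mat"
  assumes B: "B \<in> carrier_mat m m" and sym: "transpose_mat B = B" and m: "m > 0"
  shows "\<exists>lam u. eigenvector B u lam \<and> (\<forall>v\<in>carrier_vec m. v \<bullet> (B *\<^sub>v v) \<le> lam * (v \<bullet> v))"
proof -
  have B': "- B \<in> carrier_mat m m" using B by simp
  have sym': "transpose_mat (- B) = - B" using sym by (simp add: transpose_uminus)
  obtain lam u where ev: "eigenvector (- B) u lam"
    and R: "\<forall>v\<in>carrier_vec m. lam * (v \<bullet> v) \<le> v \<bullet> (- B *\<^sub>v v)"
    using rayleigh_min[OF B' sym' m] by blast
  have u: "u \<in> carrier_vec m" "u \<noteq> 0\<^sub>v m" "- B *\<^sub>v u = lam \<cdot>\<^sub>v u"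
    using ev B unfolding eigenvector_def by auto
  have "B *\<^sub>v u = (- lam) \<cdot>\<^sub>v u"
  proof (rule eq_vecI)
    fix i assume "i < dim_vec ((- lam) \<cdot>\<^sub>v u)"
    hence i: "i < m" using u by simp
    have h: "- (B *\<^sub>v u) = lam \<cdot>\<^sub>v u" using u B by simp
    have "(- (B *\<^sub>v u)) $ i = (lam \<cdot>\<^sub>v u) $ i" using h by simp
    hence "- ((B *\<^sub>v u) $ i) = lam * u $ i" using i u B by simp
    thus "(B *\<^sub>v u) $ i = ((- lam) \<cdot>\<^sub>v u) $ i" using i u B by simp
  qed (use u B in simp)
  hence "eigenvector B u (- lam)" using u B unfolding eigenvector_def by auto
  moreover have "\<forall>v\<in>carrier_vec m. v \<bullet> (B *\<^sub>v v) \<le> (- lam) * (v \<bullet> v)"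
  proof
    fix v :: "real vec" assume v: "v \<in> carrier_vec m"
    have "lam * (v \<bullet> v) \<le> v \<bullet> (- B *\<^sub>v v)" using R v by blast
    also have "v \<bullet> (- B *\<^sub>v v) = - (v \<bullet> (B *\<^sub>v v))" using v B by simp
    finally show "v \<bullet> (B *\<^sub>v v) \<le> (- lam) * (v \<bullet> v)" by simp
  qed
  ultimately show ?thesis by blast
qed

lemma self_prod_nonneg:
  fixes v :: "real vec"
  shows "v \<bullet> v \<ge> 0"
  unfolding scalar_prod_def by (intro sum_nonneg) simp

lemma self_prod_pos:
  fixes v :: "real vec"
  assumes v: "v \<in> carrier_vec m" "v \<noteq> 0\<^sub>v m"
  shows "v \<bullet> v > 0"
proof -
  have "v \<bullet> v \<ge> 0" unfolding nf_expand[OF v(1)] by (simp add: sum_nonneg)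
  moreover have "v \<bullet> v \<noteq> 0"
  proof
    assume "v \<bullet> v = 0"
    hence "\<forall>i\<in>{..<m}. (v$i)^2 = 0" unfolding nf_expand[OF v(1)]
      by (subst sum_nonneg_eq_0_iff[symmetric]) auto
    hence "v = 0\<^sub>v m" using v(1) by (intro eq_vecI) auto
    thus False using v(2) by simp
  qed
  ultimately show ?thesis by simp
qed

lemma AtA_form:
  fixes A :: "real mat"
  assumes A: "A \<in> carrier_mat n m" and v: "v \<in> carrier_vec m"
  shows "v \<bullet> ((transpose_mat A * A) *\<^sub>v v) = (A *\<^sub>v v) \<bullet> (A *\<^sub>v v)"
proof -
  have At: "transpose_mat A \<in> carrier_mat m n" using A by simp
  have Av: "A *\<^sub>v v \<in> carrier_vec n" using A v by simp
  have AtAv: "transpose_mat A *\<^sub>v (A *\<^sub>v v) \<in> carrier_vec m" using At Av by simp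
  have "(transpose_mat A * A) *\<^sub>v v = transpose_mat A *\<^sub>v (A *\<^sub>v v)"
    by (rule assoc_mult_mat_vec[OF At A v])
  hence "v \<bullet> ((transpose_mat A * A) *\<^sub>v v) = v \<bullet> (transpose_mat A *\<^sub>v (A *\<^sub>v v))" by (rule arg_cong)
  also have "\<dots> = (transpose_mat A *\<^sub>v (A *\<^sub>v v)) \<bullet> v"
    by (rule comm_scalar_prod[OF v AtAv])
  also have "\<dots> = (A *\<^sub>v v) \<bullet> (A *\<^sub>v v)"
    by (rule transpose_vec_mult_scalar[OF A v Av])
  finally show ?thesis .
qed

lemma sing_bounds:
  fixes A :: "real mat"
  assumes A: "A \<in> carrier_mat n m" and m: "m > 0"
  shows "0 \<le> sigma_min A" "sigma_min A \<le> sigma_max A"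
    "\<And>v. v \<in> carrier_vec m \<Longrightarrow> (sigma_min A)^2 * (v \<bullet> v) \<le> (A *\<^sub>v v) \<bullet> (A *\<^sub>v v)"
    "\<And>v. v \<in> carrier_vec m \<Longrightarrow> (A *\<^sub>v v) \<bullet> (A *\<^sub>v v) \<le> (sigma_max A)^2 * (v \<bullet> v)"
proof -
  define B where "B = transpose_mat A * A"
  have B: "B \<in> carrier_mat m m" unfolding B_def using A by simp
  have sym: "transpose_mat B = B" unfolding B_def using A by (simp add: transpose_mult[of _ m n])
  define S where "S = {\<mu>. eigenvalue B \<mu>}"
  have "S = {x. poly (char_poly B) x = 0}" unfolding S_def by (intro Collect_cong) (rule eigenvalue_root_char_poly[OF B])
  moreover have "char_poly B \<noteq> 0" using degree_monic_char_poly[OF B] by auto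
  ultimately have finS: "finite S" using poly_roots_finite by simp
  have nonneg: "\<mu> \<ge> 0" if muS: "\<mu> \<in> S" for \<mu>
  proof -
    obtain u where u: "eigenvector B u \<mu>" using muS unfolding S_def eigenvalue_def by blast
    hence u': "u \<in> carrier_vec m" "u \<noteq> 0\<^sub>v m" "B *\<^sub>v u = \<mu> \<cdot>\<^sub>v u"
      using B unfolding eigenvector_def by auto
    have "\<mu> * (u \<bullet> u) = u \<bullet> (B *\<^sub>v u)" using u' by simp
    also have "\<dots> = (A *\<^sub>v u) \<bullet> (A *\<^sub>v u)" unfolding B_def by (rule AtA_form[OF A u'(1)])
    also have "\<dots> \<ge> 0" by (rule self_prod_nonneg)
    finally show ?thesis using self_prod_pos[OF u'(1,2)] by (simp add: zero_le_mult_iff)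
  qed
  obtain l1 u1 where e1: "eigenvector B u1 l1" and R1: "\<forall>v\<in>carrier_vec m. l1 * (v \<bullet> v) \<le> v \<bullet> (B *\<^sub>v v)"
    using rayleigh_min[OF B sym m] by blast
  obtain l2 u2 where e2: "eigenvector B u2 l2" and R2: "\<forall>v\<in>carrier_vec m. v \<bullet> (B *\<^sub>v v) \<le> l2 * (v \<bullet> v)"
    using rayleigh_max[OF B sym m] by blast
  have l1S: "l1 \<in> S" and l2S: "l2 \<in> S" using e1 e2 unfolding S_def eigenvalue_def by auto
  hence Sne: "S \<noteq> {}" by auto
  have monosq: "mono sqrt" by (rule monoI) simp
  have smin: "sigma_min A = sqrt (Min S)"
    unfolding sigma_min_def sing_vals_def S_def[symmetric] B_def[symmetric]
    using mono_Min_commute[OF monosq finS Sne] by simp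
  have smax: "sigma_max A = sqrt (Max S)"
    unfolding sigma_max_def sing_vals_def S_def[symmetric] B_def[symmetric]
    using mono_Max_commute[OF monosq finS Sne] by simp
  have minS: "Min S \<in> S" "Min S \<le> l1" using finS Sne l1S by auto
  have maxS: "Max S \<in> S" "l2 \<le> Max S" using finS Sne l2S by auto
  have mn0: "0 \<le> Min S" and mx0: "0 \<le> Max S" using nonneg minS(1) maxS(1) by auto
  show "0 \<le> sigma_min A" unfolding smin using mn0 by simp
  show "sigma_min A \<le> sigma_max A" unfolding smin smax using finS Sne by simp
  show "(sigma_min A)^2 * (v \<bullet> v) \<le> (A *\<^sub>v v) \<bullet> (A *\<^sub>v v)" if v: "v \<in> carrier_vec m" for v
  proof -
    have vv: "v \<bullet> v \<ge> 0" using nf_expand[OF v] by (simp add: sum_nonneg)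
    have "(sigma_min A)^2 * (v \<bullet> v) = Min S * (v \<bullet> v)" unfolding smin using mn0 by simp
    also have "\<dots> \<le> l1 * (v \<bullet> v)" using minS(2) vv by (simp add: mult_right_mono)
    also have "\<dots> \<le> v \<bullet> (B *\<^sub>v v)" using R1 v by blast
    also have "\<dots> = (A *\<^sub>v v) \<bullet> (A *\<^sub>v v)" unfolding B_def by (rule AtA_form[OF A v])
    finally show ?thesis .
  qed
  show "(A *\<^sub>v v) \<bullet> (A *\<^sub>v v) \<le> (sigma_max A)^2 * (v \<bullet> v)" if v: "v \<in> carrier_vec m" for v
  proof -
    have vv: "v \<bullet> v \<ge> 0" using nf_expand[OF v] by (simp add: sum_nonneg)
    have "(A *\<^sub>v v) \<bullet> (A *\<^sub>v v) = v \<bullet> (B *\<^sub>v v)" unfolding B_def by (rule AtA_form[OF A v, symmetric])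
    also have "\<dots> \<le> l2 * (v \<bullet> v)" using R2 v by blast
    also have "\<dots> \<le> Max S * (v \<bullet> v)" using maxS(2) vv by (simp add: mult_right_mono)
    also have "\<dots> = (sigma_max A)^2 * (v \<bullet> v)" unfolding smax using mx0 by simp
    finally show ?thesis .
  qed
qed

lemma relu_dim[simp]: "dim_vec (relu v) = dim_vec v"
  unfolding relu_def by simp

lemma enc_dim:
  assumes E_dim: "\<forall>k\<in>{1..\<kappa>}. E k \<in> carrier_mat (d (k - 1)) (d k)"
    and x: "x \<in> carrier_vec (d 0)"
  shows "k \<le> \<kappa> \<Longrightarrow> enc E x k \<in> carrier_vec (d k)"
proof (induction k)
  case 0 thus ?case using x by simp
next
  case (Suc k)
  hence "Suc k \<in> {1..\<kappa>}" by simp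
  hence "E (Suc k) \<in> carrier_mat (d (Suc k - 1)) (d (Suc k))" using E_dim by blast
  hence "dim_col (E (Suc k)) = d (Suc k)" by (metis carrier_matD(2))
  hence "dim_vec (relu (transpose_mat (E (Suc k)) *\<^sub>v enc E x k)) = d (Suc k)"
    by (simp only: relu_dim dim_mult_mat_vec index_transpose_mat)
  thus ?case by (simp only: enc.simps carrier_vec_def mem_Collect_eq)
qed

lemma skip_dim:
  assumes S_dim: "\<forall>k\<in>{1..\<kappa>}. S k \<in> carrier_mat (d (k - 1)) (s k)" and l: "l \<in> {1..\<kappa>}"
  shows "skip E S x l \<in> carrier_vec (s l)"
proof -
  have "S l \<in> carrier_mat (d (l - 1)) (s l)" using S_dim l by blast
  hence "dim_col (S l) = s l" by (metis carrier_matD(2))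
  hence "dim_vec (skip E S x l) = s l"
    by (simp only: skip_def relu_dim dim_mult_mat_vec index_transpose_mat)
  thus ?thesis by (rule carrier_vecI)
qed

lemma dec_aux_dim:
  assumes E_dim: "\<forall>k\<in>{1..\<kappa>}. E k \<in> carrier_mat (d (k - 1)) (d k)"
    and St_dim: "\<forall>k\<in>{1..\<kappa>}. St k \<in> carrier_mat (d (k - 1)) (s k)"
    and x: "x \<in> carrier_vec (d 0)"
  shows "j \<le> \<kappa> \<Longrightarrow> dec_aux \<kappa> E D S St x j \<in> carrier_vec (d (\<kappa> - j))"
proof (induction j)
  case 0 thus ?case using enc_dim[OF E_dim x] by simp
next
  case (Suc j)
  hence "\<kappa> - j \<in> {1..\<kappa>}" by auto
  hence "St (\<kappa> - j) \<in> carrier_mat (d (\<kappa> - j - 1)) (s (\<kappa> - j))" using St_dim by blast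
  hence "dim_row (St (\<kappa> - j)) = d (\<kappa> - j - 1)" by (metis carrier_matD(1))
  moreover have "\<kappa> - j - 1 = \<kappa> - Suc j" by simp
  ultimately have "dim_vec (dec_aux \<kappa> E D S St x (Suc j)) = d (\<kappa> - Suc j)"
    by (simp only: dec_aux.simps relu_dim index_add_vec(2) dim_mult_mat_vec)
  thus ?case by (rule carrier_vecI)
qed

lemma net_dim:
  assumes E_dim: "\<forall>k\<in>{1..\<kappa>}. E k \<in> carrier_mat (d (k - 1)) (d k)"
    and St_dim: "\<forall>k\<in>{1..\<kappa>}. St k \<in> carrier_mat (d (k - 1)) (s k)"
    and x: "x \<in> carrier_vec (d 0)"
  shows "net \<kappa> E D S St x \<in> carrier_vec (d 0)"
  using dec_aux_dim[OF E_dim St_dim x, of \<kappa>] unfolding net_def dec_def by simp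

lemma Lam_dim:
  assumes St_dim: "\<forall>k\<in>{1..\<kappa>}. St k \<in> carrier_mat (d (k - 1)) (s k)" and l: "l \<in> {1..\<kappa>}"
  shows "Lam \<kappa> E D S St x l \<in> carrier_mat (d (l - 1)) (d (l - 1))"
proof -
  have "St l \<in> carrier_mat (d (l - 1)) (s l)" using St_dim l by blast
  hence "dim_row (St l) = d (l - 1)" by (metis carrier_matD(1))
  hence "dim_vec (preact \<kappa> E D S St x l) = d (l - 1)"
    by (simp only: preact_def index_add_vec(2) dim_mult_mat_vec)
  thus ?thesis unfolding Lam_def Let_def by (simp only: mat_carrier)
qed

lemma Ups_dim:
  assumes D_dim: "\<forall>k\<in>{1..\<kappa>}. D k \<in> carrier_mat (d (k - 1)) (d k)"
    and St_dim: "\<forall>k\<in>{1..\<kappa>}. St k \<in> carrier_mat (d (k - 1)) (s k)"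
  shows "k \<le> \<kappa> \<Longrightarrow> Ups \<kappa> E D S St x (d 0) k \<in> carrier_mat (d 0) (d k)"
proof (induction k)
  case 0 thus ?case by simp
next
  case (Suc k)
  have L: "Lam \<kappa> E D S St x (Suc k) \<in> carrier_mat (d k) (d k)"
    using Lam_dim[OF St_dim, of "Suc k"] Suc by simp
  have "Suc k \<in> {1..\<kappa>}" using Suc by simp
  hence "D (Suc k) \<in> carrier_mat (d (Suc k - 1)) (d (Suc k))" using D_dim by blast
  hence DD: "D (Suc k) \<in> carrier_mat (d k) (d (Suc k))" by simp
  have U: "Ups \<kappa> E D S St x (d 0) k \<in> carrier_mat (d 0) (d k)" using Suc by simp
  show ?case using mult_carrier_mat[OF mult_carrier_mat[OF U L] DD] by simp
qed

lemma sum_pairs: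
  fixes f :: "nat \<Rightarrow> nat \<Rightarrow> real"
  shows "(\<Sum>k<a*b. f (k div b) (k mod b)) = (\<Sum>i<a. \<Sum>j<b. f i j)"
proof -
  have "(\<Sum>k<a*b. f (k div b) (k mod b)) = (\<Sum>p\<in>{..<a}\<times>{..<b}. f (fst p) (snd p))"
  proof (rule sum.reindex_bij_witness[where j = "\<lambda>k. (k div b, k mod b)" and i = "\<lambda>p. fst p * b + snd p"])
    fix k assume k: "k \<in> {..<a*b}"
    show "fst (k div b, k mod b) * b + snd (k div b, k mod b) = k" by simp
    have b: "b > 0" using k by (cases "b = 0") auto
    have "k div b < a" using k b by (simp add: div_less_iff_less_mult)
    thus "(k div b, k mod b) \<in> {..<a}\<times>{..<b}" using b by simp
    show "f (fst (k div b, k mod b)) (snd (k div b, k mod b)) = f (k div b) (k mod b)" by simp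
  next
    fix p assume p: "p \<in> {..<a}\<times>{..<b}"
    then obtain x y where p': "p = (x,y)" "x < a" "y < b" by auto
    show "((fst p * b + snd p) div b, (fst p * b + snd p) mod b) = p" using p' by simp
    have "x * b + y < x * b + b" using p' by simp
    also have "\<dots> = (x+1) * b" by simp
    also have "\<dots> \<le> a * b" using p' by (intro mult_right_mono) auto
    finally show "fst p * b + snd p \<in> {..<a*b}" using p' by simp
  qed
  also have "\<dots> = (\<Sum>i<a. \<Sum>j<b. f i j)" by (simp add: sum.cartesian_product case_prod_beta)
  finally show ?thesis .
qed

lemma kron_mult:
  fixes \<chi> w :: "real vec"
  assumes chi: "\<chi> \<in> carrier_vec sl" and w: "w \<in> carrier_vec dd" and k: "k < sl * dd"
  shows "(kron (col_mat \<chi>) (1\<^sub>m dd) *\<^sub>v w) $ k = \<chi> $ (k div dd) * w $ (k mod dd)"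
proof -
  have dd: "dd > 0" using k by (cases "dd = 0") auto
  have kd: "k div dd < sl" using k dd by (simp add: div_less_iff_less_mult)
  have km: "k mod dd < dd" using dd by simp
  have "(kron (col_mat \<chi>) (1\<^sub>m dd) *\<^sub>v w) $ k
        = (\<Sum>j<dd. (\<chi> $ (k div dd) * (if k mod dd = j then 1 else 0)) * w $ j)"
    using chi w k kd km unfolding kron_def col_mat_def
    by (simp add: mult_mat_vec_def scalar_prod_def row_def atLeast0LessThan)
  also have "\<dots> = (\<Sum>j<dd. if j = k mod dd then \<chi> $ (k div dd) * w $ j else 0)"
    by (rule sum.cong) auto
  also have "\<dots> = \<chi> $ (k div dd) * w $ (k mod dd)" using km by simp
  finally show ?thesis .
qed

theorem lemma2:
  fixes \<kappa> :: nat and d s :: "nat \<Rightarrow> nat"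
    and E D S St :: "nat \<Rightarrow> real mat"
    and T :: nat and xs ys :: "nat \<Rightarrow> real vec" and l :: nat
  assumes dims_pos: "\<forall>k\<le>\<kappa>. d k > 0" "\<forall>k\<in>{1..\<kappa>}. s k > 0"
    and E_dim: "\<forall>k\<in>{1..\<kappa>}. E k \<in> carrier_mat (d (k - 1)) (d k)"
    and D_dim: "\<forall>k\<in>{1..\<kappa>}. D k \<in> carrier_mat (d (k - 1)) (d k)"
    and S_dim: "\<forall>k\<in>{1..\<kappa>}. S k \<in> carrier_mat (d (k - 1)) (s k)"
    and St_dim: "\<forall>k\<in>{1..\<kappa>}. St k \<in> carrier_mat (d (k - 1)) (s k)"
    and T_pos: "T > 0"
    and data: "\<forall>i<T. xs i \<in> carrier_vec (d 0) \<and> ys i \<in> carrier_vec (d 0)"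
    and l: "l \<in> {1..\<kappa>}"
    and sT: "s l \<ge> T" and dd: "d (l - 1) \<ge> d 0"
  defines "C \<equiv> (1/2) * (\<Sum>i<T. (vnorm (net \<kappa> E D S St (xs i) - ys i))^2)"
    and "grad \<equiv> vec (s l * d (l - 1)) (\<lambda>k. \<Sum>i<T.
           ((kron (col_mat (skip E S (xs i) l)) (1\<^sub>m (d (l - 1)))
             * Lam \<kappa> E D S St (xs i) l
             * transpose_mat (Ups \<kappa> E D S St (xs i) (d 0) (l - 1)))
            *\<^sub>v (net \<kappa> E D S St (xs i) - ys i)) $ k)"
    and "\<Gamma> \<equiv> mat (s l) T (\<lambda>(a,i). skip E S (xs i) l $ a)"
    and "M \<equiv> (\<lambda>i. Lam \<kappa> E D S St (xs i) l * transpose_mat (Ups \<kappa> E D S St (xs i) (d 0) (l - 1)))"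
  shows "vnorm grad \<ge> sigma_min \<Gamma> * (MIN i\<in>{..<T}. sigma_min (M i)) * sqrt (2 * C)
         \<and> vnorm grad \<le> sigma_max \<Gamma> * (MAX i\<in>{..<T}. sigma_max (M i)) * sqrt (2 * C)"
proof -
  define dd where "dd = d (l - 1)"
  define sl where "sl = s l"
  have lk: "l \<le> \<kappa>" "l - 1 \<le> \<kappa>" "1 \<le> l" using l by auto
  define r where "r = (\<lambda>i. net \<kappa> E D S St (xs i) - ys i)"
  define chi where "chi = (\<lambda>i. skip E S (xs i) l)"
  define w where "w = (\<lambda>i. M i *\<^sub>v r i)"
  have r_c: "r i \<in> carrier_vec (d 0)" if "i < T" for i
    using net_dim[OF E_dim St_dim, of "xs i" D S] data that unfolding r_def by auto
  have Lc: "Lam \<kappa> E D S St x l \<in> carrier_mat dd dd" for x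
    using Lam_dim[OF St_dim l] unfolding dd_def .
  have Uc: "Ups \<kappa> E D S St x (d 0) (l - 1) \<in> carrier_mat (d 0) dd" for x
    using Ups_dim[OF D_dim St_dim lk(2)] unfolding dd_def .
  have M_c: "M i \<in> carrier_mat dd (d 0)" for i
    unfolding M_def using Lc Uc by (meson mult_carrier_mat transpose_carrier_mat)
  have chi_c: "chi i \<in> carrier_vec sl" for i
    unfolding chi_def sl_def by (rule skip_dim[OF S_dim l])
  have w_c: "w i \<in> carrier_vec dd" if "i < T" for i
    unfolding w_def by (rule mult_mat_vec_carrier[OF M_c r_c[OF that]])
  have Kc: "kron (col_mat (chi i)) (1\<^sub>m dd) \<in> carrier_mat (sl * dd) dd" for i
  proof -
    have "dim_vec (chi i) = sl" using chi_c[of i] by (metis carrier_vecD)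
    thus ?thesis unfolding kron_def col_mat_def by (simp only: dim_row_mat dim_col_mat index_one_mat mat_carrier mult_1)
  qed
  have dimg: "dim_vec grad = sl * dd" unfolding grad_def sl_def dd_def by (simp only: dim_vec)
  have gk: "grad $ k = (\<Sum>i<T. chi i $ (k div dd) * w i $ (k mod dd))" if k: "k < sl * dd" for k
  proof -
    have "grad $ k = (\<Sum>i<T. ((kron (col_mat (chi i)) (1\<^sub>m dd)
             * Lam \<kappa> E D S St (xs i) l
             * transpose_mat (Ups \<kappa> E D S St (xs i) (d 0) (l - 1))) *\<^sub>v r i) $ k)"
      using k unfolding grad_def chi_def r_def sl_def dd_def by simp
    also have "\<dots> = (\<Sum>i<T. chi i $ (k div dd) * w i $ (k mod dd))"
    proof (rule sum.cong[OF refl])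
      fix i assume "i \<in> {..<T}"
      hence i: "i < T" by simp
      have "kron (col_mat (chi i)) (1\<^sub>m dd) * Lam \<kappa> E D S St (xs i) l
             * transpose_mat (Ups \<kappa> E D S St (xs i) (d 0) (l - 1))
          = kron (col_mat (chi i)) (1\<^sub>m dd) * M i"
        unfolding M_def using Kc[of i] Lc Uc by (meson assoc_mult_mat transpose_carrier_mat)
      hence "(kron (col_mat (chi i)) (1\<^sub>m dd) * Lam \<kappa> E D S St (xs i) l
             * transpose_mat (Ups \<kappa> E D S St (xs i) (d 0) (l - 1))) *\<^sub>v r i
          = kron (col_mat (chi i)) (1\<^sub>m dd) *\<^sub>v w i"
        unfolding w_def using Kc[of i] M_c[of i] r_c[OF i] by simp
      thus "((kron (col_mat (chi i)) (1\<^sub>m dd)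
             * Lam \<kappa> E D S St (xs i) l
             * transpose_mat (Ups \<kappa> E D S St (xs i) (d 0) (l - 1))) *\<^sub>v r i) $ k
            = chi i $ (k div dd) * w i $ (k mod dd)"
        using kron_mult[OF chi_c w_c[OF i] k] by simp
    qed
    finally show ?thesis .
  qed
  define G where "G = (\<Sum>k<sl*dd. (grad$k)^2)"
  have vg: "vnorm grad = sqrt G" unfolding vnorm_def G_def dimg ..
  define om where "om = (\<lambda>b. vec T (\<lambda>i. w i $ b))"
  have om_c: "om b \<in> carrier_vec T" for b unfolding om_def by simp
  have Gc: "\<Gamma> \<in> carrier_mat sl T" unfolding \<Gamma>_def sl_def by simp
  have Gom: "(\<Gamma> *\<^sub>v om b) $ a = (\<Sum>i<T. chi i $ a * w i $ b)" if "a < sl" for a b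
    using that unfolding \<Gamma>_def om_def chi_def sl_def
    by (simp add: mult_mat_vec_def scalar_prod_def row_def atLeast0LessThan)
  have G_eq: "G = (\<Sum>b<dd. (\<Gamma> *\<^sub>v om b) \<bullet> (\<Gamma> *\<^sub>v om b))"
  proof -
    have "G = (\<Sum>k<sl*dd. (\<lambda>a b. (\<Sum>i<T. chi i $ a * w i $ b)^2) (k div dd) (k mod dd))"
      unfolding G_def by (rule sum.cong) (auto simp: gk)
    also have "\<dots> = (\<Sum>a<sl. \<Sum>b<dd. (\<Sum>i<T. chi i $ a * w i $ b)^2)" by (rule sum_pairs)
    also have "\<dots> = (\<Sum>b<dd. \<Sum>a<sl. (\<Sum>i<T. chi i $ a * w i $ b)^2)" by (rule sum.swap)
    also have "\<dots> = (\<Sum>b<dd. (\<Gamma> *\<^sub>v om b) \<bullet> (\<Gamma> *\<^sub>v om b))"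
    proof (rule sum.cong[OF refl])
      fix b
      have "\<Gamma> *\<^sub>v om b \<in> carrier_vec sl" using Gc om_c[of b] by simp
      thus "(\<Sum>a<sl. (\<Sum>i<T. chi i $ a * w i $ b)^2) = (\<Gamma> *\<^sub>v om b) \<bullet> (\<Gamma> *\<^sub>v om b)"
        by (simp add: nf_expand Gom)
    qed
    finally show ?thesis .
  qed
  define W where "W = (\<Sum>i<T. w i \<bullet> w i)"
  have W_eq: "W = (\<Sum>b<dd. om b \<bullet> om b)"
  proof -
    have "W = (\<Sum>i<T. \<Sum>b<dd. (w i $ b)^2)" unfolding W_def
      by (rule sum.cong[OF refl]) (simp add: nf_expand[OF w_c])
    also have "\<dots> = (\<Sum>b<dd. \<Sum>i<T. (w i $ b)^2)" by (rule sum.swap)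
    also have "\<dots> = (\<Sum>b<dd. om b \<bullet> om b)"
    proof (rule sum.cong[OF refl])
      fix b
      show "(\<Sum>i<T. (w i $ b)^2) = om b \<bullet> om b"
        unfolding nf_expand[OF om_c] by (simp add: om_def)
    qed
    finally show ?thesis .
  qed
  note SG = sing_bounds[OF Gc T_pos]
  have G_lo: "(sigma_min \<Gamma>)^2 * W \<le> G"
    unfolding W_eq G_eq sum_distrib_left by (rule sum_mono) (rule SG(3)[OF om_c])
  have G_hi: "G \<le> (sigma_max \<Gamma>)^2 * W"
    unfolding W_eq G_eq sum_distrib_left by (rule sum_mono) (rule SG(4)[OF om_c])
  define R where "R = (\<Sum>i<T. r i \<bullet> r i)"
  have C_eq: "2 * C = R"
  proof -
    have "vnorm (r i) ^ 2 = r i \<bullet> r i" if "i < T" for i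
      unfolding vnorm_def using nf_expand[OF r_c[OF that]] r_c[OF that]
      by (simp add: sum_nonneg)
    hence "(\<Sum>i<T. vnorm (r i) ^ 2) = R" unfolding R_def by (intro sum.cong) auto
    thus ?thesis unfolding C_def r_def by simp
  qed
  have d0: "d 0 > 0" using dims_pos by auto
  define mM where "mM = (MIN i\<in>{..<T}. sigma_min (M i))"
  define MM where "MM = (MAX i\<in>{..<T}. sigma_max (M i))"
  have TT: "{..<T} \<noteq> {}" using T_pos by auto
  have mM_le: "mM \<le> sigma_min (M i)" if "i < T" for i unfolding mM_def using that by simp
  have MM_ge: "sigma_max (M i) \<le> MM" if "i < T" for i unfolding MM_def using that by simp
  have mM0: "0 \<le> mM" unfolding mM_def using TT sing_bounds(1)[OF M_c d0] by simp
  have MM0: "0 \<le> MM"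
    using MM_ge[OF T_pos] sing_bounds(1,2)[OF M_c[of 0] d0] by linarith
  have W_lo: "mM^2 * R \<le> W" unfolding R_def W_def sum_distrib_left
  proof (rule sum_mono)
    fix i assume "i \<in> {..<T}"
    hence i: "i < T" by simp
    have "mM^2 * (r i \<bullet> r i) \<le> (sigma_min (M i))^2 * (r i \<bullet> r i)"
      using mM_le[OF i] mM0 self_prod_nonneg[of "r i"]
      by (intro mult_right_mono power_mono) auto
    also have "\<dots> \<le> w i \<bullet> w i" unfolding w_def by (rule sing_bounds(3)[OF M_c d0 r_c[OF i]])
    finally show "mM^2 * (r i \<bullet> r i) \<le> w i \<bullet> w i" .
  qed
  have W_hi: "W \<le> MM^2 * R" unfolding R_def W_def sum_distrib_left
  proof (rule sum_mono)
    fix i assume "i \<in> {..<T}"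
    hence i: "i < T" by simp
    have "w i \<bullet> w i \<le> (sigma_max (M i))^2 * (r i \<bullet> r i)"
      unfolding w_def by (rule sing_bounds(4)[OF M_c d0 r_c[OF i]])
    also have "\<dots> \<le> MM^2 * (r i \<bullet> r i)"
      using MM_ge[OF i] sing_bounds(1,2)[OF M_c[of i] d0] self_prod_nonneg[of "r i"]
      by (intro mult_right_mono power_mono) auto
    finally show "w i \<bullet> w i \<le> MM^2 * (r i \<bullet> r i)" .
  qed
  have R0: "R \<ge> 0" unfolding R_def by (intro sum_nonneg) (rule self_prod_nonneg)
  have sG0: "0 \<le> sigma_min \<Gamma>" "0 \<le> sigma_max \<Gamma>" using SG(1,2) by linarith+
  have lo: "sigma_min \<Gamma> * mM * sqrt (2 * C) \<le> vnorm grad"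
  proof -
    have "sigma_min \<Gamma> * mM * sqrt (2 * C) = sqrt ((sigma_min \<Gamma>)^2 * (mM^2 * R))"
      using sG0 mM0 C_eq by (simp add: real_sqrt_mult)
    also have "\<dots> \<le> sqrt G"
    proof (rule real_sqrt_le_mono)
      have "(sigma_min \<Gamma>)^2 * (mM^2 * R) \<le> (sigma_min \<Gamma>)^2 * W"
        using W_lo by (intro mult_left_mono) auto
      thus "(sigma_min \<Gamma>)^2 * (mM^2 * R) \<le> G" using G_lo by linarith
    qed
    finally show ?thesis unfolding vg .
  qed
  have hi: "vnorm grad \<le> sigma_max \<Gamma> * MM * sqrt (2 * C)"
  proof -
    have "sqrt G \<le> sqrt ((sigma_max \<Gamma>)^2 * (MM^2 * R))"
    proof (rule real_sqrt_le_mono)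
      have "(sigma_max \<Gamma>)^2 * W \<le> (sigma_max \<Gamma>)^2 * (MM^2 * R)"
        using W_hi by (intro mult_left_mono) auto
      thus "G \<le> (sigma_max \<Gamma>)^2 * (MM^2 * R)" using G_hi by linarith
    qed
    also have "\<dots> = sigma_max \<Gamma> * MM * sqrt (2 * C)"
      using sG0 MM0 C_eq by (simp add: real_sqrt_mult)
    finally show ?thesis unfolding vg .
  qed
  show ?thesis using lo hi unfolding mM_def MM_def by simp
qed

end
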